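(* In the single-component setting, suppose $\sigma\le1$, $\sigma\le\frac{4\sqrt2}{\sqrt\pi}$, $\gamma^\star_\sigma\le\min\{1,\frac1{4\sqrt\rho}\}$ where $\gamma^\star_\sigma=\sigma^2+\sigma\sqrt{2\log\frac{4\sqrt2}{\sqrt\pi\sigma}}$, $\sigma^2\rho^2/\nu\le1/8$, and $L(w)\le\tilde\kappa(\rho,\nu)$. Then $\frac{\partial}{\partial\sigma}L(w)\ge p(0)\,\sigma\Big(\frac{\sqrt\pi}{11\sqrt\rho}\Big(\frac{\sqrt\nu}{2p(0)\sqrt\pi}\Big)^{\frac\nu{4\rho}}-2\sqrt2\max\Big\{1,\Big(\frac{\sqrt\rho}{2p(0)\sqrt\pi}\Big)^{\frac\nu{8\rho}}\Big\}\Big)$.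
   Context: Single-component setting: $y$ uniform on $\{\pm1\}$; $x=(x_1,x_2)$, $x_1\in\mathbb{R}^{d_1}$, $x_2\sim\mathcal{N}(0,\Sigma_2)$ with $\Sigma_2\succ0$ independent of $x_1$. $\ell_{exp}(t)=\exp(-|t|)$, $L(w)=\mathbb{E}[\ell_{exp}(w^\top x)]$. For fixed $w=(w_1,w_2)$: $\sigma=\sqrt{w_2^\top\Sigma_2w_2}$; $p$ is the density of $\mu=w_1^\top x_1$, assumed such that $\log p$ is differentiable, $\nu$-strongly concave and $\rho$-smooth (i.e. $-\rho\le(\log p)''\le-\nu$) for some $0<\nu\le\rho$. $L(w)=\mathbb{E}_\mu[g_\sigma(\mu)]$ with $g_\sigma(\mu)=\mathbb{E}_{Z\sim\mathcal{N}(0,1)}[\ell_{exp}(\mu+\sigma Z)]$, and $\frac{\partial}{\partial\sigma}L(w)$ is the derivative in $\sigma$ with the law of $\mu$ held fixed. Constants: $p^\star(\rho,\nu)=\frac{\sqrt\nu}{2\sqrt\pi}\min\{1,\frac{\sqrt\nu}{\sqrt\rho}(\frac{\sqrt\pi}{44\sqrt{2\rho}})^{8\rho/\nu}\}$ and $\tilde\kappa(\rho,\nu)=\min\Big\{\frac{\sqrt\pi}{4\sqrt\rho}\,p^\star(\rho,\nu)^{1-\frac{\nu}{4\rho}}\big(\frac{\nu}{2\sqrt\pi}\big)^{\frac{\nu}{4\rho}},\ \frac{\sqrt\nu}{8\sqrt{2\pi}(\sqrt\rho+\sqrt2)}\exp\big(-(\frac{\sqrt\rho+4}{2\sqrt\nu})^2\big)\Big\}$.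 *)

theory Defs
  imports "HOL-Probability.Probability"
begin

definition lexp :: "real \<Rightarrow> real" where
  "lexp t = exp (- \<bar>t\<bar>)"

definition gsig :: "real \<Rightarrow> real \<Rightarrow> real" where
  "gsig s \<mu> = (LINT z|lborel. std_normal_density z * lexp (\<mu> + s * z))"

(* L as a function of sigma, with the law (density p) of mu = w1^T x1 held fixed:
   L = E_mu [ g_sigma(mu) ] *)
definition Lsig :: "(real \<Rightarrow> real) \<Rightarrow> real \<Rightarrow> real" where
  "Lsig p s = (LINT \<mu>|lborel. p \<mu> * gsig s \<mu>)"

definition pstar :: "real \<Rightarrow> real \<Rightarrow> real" where
  "pstar \<rho> \<nu> = sqrt \<nu> / (2 * sqrt pi) *
     min 1 (sqrt \<nu> / sqrt \<rho> * (sqrt pi / (44 * sqrt (2 * \<rho>))) powr (8 * \<rho> / \<nu>))"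

definition kappa_tilde :: "real \<Rightarrow> real \<Rightarrow> real" where
  "kappa_tilde \<rho> \<nu> = min
     (sqrt pi / (4 * sqrt \<rho>) * pstar \<rho> \<nu> powr (1 - \<nu> / (4 * \<rho>)) *
        (\<nu> / (2 * sqrt pi)) powr (\<nu> / (4 * \<rho>)))
     (sqrt \<nu> / (8 * sqrt (2 * pi) * (sqrt \<rho> + sqrt 2)) *
        exp (- (((sqrt \<rho> + 4) / (2 * sqrt \<nu>))\<^sup>2)))"

definition gamma_star :: "real \<Rightarrow> real" where
  "gamma_star s = s\<^sup>2 + s * sqrt (2 * ln (4 * sqrt 2 / (sqrt pi * s)))"

end

theory Submission
  imports Defs "HOL-Real_Asymp.Real_Asymp"
begin



lemma hbi_int: "has_bochner_integral M f x \<Longrightarrow> integrable M f"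
  by (simp add: has_bochner_integral_iff)

lemma hbi_eq: "has_bochner_integral M f x \<Longrightarrow> integral\<^sup>L M f = x"
  by (simp add: has_bochner_integral_iff)

lemma gauss_integral:
  fixes a b :: real assumes b: "0 < b"
  shows "has_bochner_integral lborel (\<lambda>x. exp (a * x - b * x\<^sup>2 / 2)) (sqrt (2 * pi / b) * exp (a\<^sup>2 / (2 * b)))"
proof -
  define C where "C = sqrt (2 * pi / b) * exp (a\<^sup>2 / (2 * b))"
  have eq: "exp (a * x - b * x\<^sup>2 / 2) = C * normal_density (a / b) (1 / sqrt b) x" for x
  proof -
    have 1: "normal_density (a / b) (1 / sqrt b) x = sqrt (b / (2*pi)) * exp (- (x - a/b)\<^sup>2 * b / 2)"
      using b unfolding normal_density_def by (simp add: power_divide real_sqrt_divide)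
    have 2: "a * x - b * x\<^sup>2 / 2 = a\<^sup>2 / (2 * b) + (- (x - a/b)\<^sup>2 * b / 2)"
      using b by (simp add: field_simps power2_eq_square)
    have 3: "sqrt (2 * pi / b) * sqrt (b / (2*pi)) = 1"
      using b by (simp add: real_sqrt_mult[symmetric])
    have "C * normal_density (a / b) (1 / sqrt b) x = (sqrt (2 * pi / b) * sqrt (b / (2*pi))) * (exp (a\<^sup>2 / (2 * b)) * exp (- (x - a/b)\<^sup>2 * b / 2))"
      unfolding C_def 1 by (simp only: ac_simps)
    also have "\<dots> = exp (a * x - b * x\<^sup>2 / 2)" unfolding 3 2 exp_add by simp
    finally show ?thesis by simp
  qed
  have nd: "has_bochner_integral lborel (normal_density (a/b) (1/sqrt b)) 1"
  proof -
    have "0 < 1 / sqrt b" using b by simp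
    then show ?thesis using integrable_normal_density integral_normal_density by (simp add: has_bochner_integral_iff)
  qed
  have "has_bochner_integral lborel (\<lambda>x. C * normal_density (a / b) (1 / sqrt b) x) (C * 1)"
    by (rule has_bochner_integral_mult_right[OF nd])
  then show ?thesis by (simp add: eq C_def)
qed




lemma min_at_zero:
  fixes h h' :: "real \<Rightarrow> real"
  assumes der: "\<And>t. (h has_real_derivative h' t) (at t)"
    and pos: "\<And>t. 0 < t \<Longrightarrow> 0 \<le> h' t" and neg: "\<And>t. t < 0 \<Longrightarrow> h' t \<le> 0"
  shows "h 0 \<le> h x"
proof (cases x "0::real" rule: linorder_cases)
  case less
  from MVT2[OF less der] obtain z where z: "x < z" "z < 0" "h 0 - h x = (0 - x) * h' z" by blast
  have "(0 - x) * h' z \<le> 0" using z less neg[of z] by (intro mult_nonneg_nonpos) auto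
  then show ?thesis using z by linarith
next
  case greater
  from MVT2[OF greater der] obtain z where z: "0 < z" "z < x" "h x - h 0 = (x - 0) * h' z" by blast
  have "(x - 0) * h' z \<ge> 0" using z greater pos[of z] by simp
  then show ?thesis using z by linarith
qed simp

locale lc =
  fixes p dlogp :: "real \<Rightarrow> real" and \<rho> \<nu> :: real
  assumes nu_pos: "0 < \<nu>" and nu_le_rho: "\<nu> \<le> \<rho>"
    and p_pos: "\<And>x. 0 < p x"
    and p_int: "integrable lborel p" and p_one: "(LINT x|lborel. p x) = 1"
    and dlogp: "\<And>x. ((\<lambda>t. ln (p t)) has_real_derivative dlogp x) (at x)"
    and scs: "\<And>x y. x < y \<Longrightarrow>
          - \<rho> * (y - x) \<le> dlogp y - dlogp x \<and> dlogp y - dlogp x \<le> - \<nu> * (y - x)"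
begin

abbreviation "d \<equiv> dlogp 0"
abbreviation "p0 \<equiv> p 0"

lemma rho_pos: "0 < \<rho>" using nu_pos nu_le_rho by simp

lemma p0_pos: "0 < p0" using p_pos by simp

lemma p_isCont: "isCont p x"
proof -
  have "isCont (\<lambda>t. ln (p t)) x" using dlogp[of x] by (rule DERIV_isCont)
  then have "isCont (\<lambda>t. exp (ln (p t))) x" by (rule isCont_exp')
  moreover have "(\<lambda>t. exp (ln (p t))) = p" using p_pos by (simp add: fun_eq_iff)
  ultimately show ?thesis by simp
qed

lemma p_cont: "continuous_on UNIV p"
  using p_isCont by (simp add: continuous_at_imp_continuous_on)

lemma p_meas[measurable]: "p \<in> borel_measurable borel"
  by (rule borel_measurable_continuous_onI[OF p_cont])

lemma p_lower: "p0 * exp (d * x - \<rho> * x\<^sup>2 / 2) \<le> p x"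
proof -
  define lp where "lp t = ln (p t)" for t
  have lpd: "(lp has_real_derivative dlogp t) (at t)" for t unfolding lp_def[abs_def] by (rule dlogp)
  define h where "h t = lp t - d * t + \<rho> * t\<^sup>2 / 2" for t
  have der: "(h has_real_derivative (dlogp t - d + \<rho> * t)) (at t)" for t
    unfolding h_def by (auto intro!: derivative_eq_intros lpd)
  have "h 0 \<le> h x"
  proof (rule min_at_zero[OF der])
    fix t :: real assume "0 < t" then show "0 \<le> dlogp t - d + \<rho> * t" using scs[of 0 t] by auto
  next
    fix t :: real assume "t < 0" then show "dlogp t - d + \<rho> * t \<le> 0" using scs[of t 0] by auto
  qed
  then have "ln p0 + (d * x - \<rho> * x\<^sup>2 / 2) \<le> ln (p x)" unfolding h_def lp_def by simp
  then have "exp (ln p0 + (d * x - \<rho> * x\<^sup>2 / 2)) \<le> exp (ln (p x))" by simp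
  then show ?thesis using p_pos[of x] p0_pos by (simp add: exp_add)
qed

lemma p_upper: "p x \<le> p0 * exp (d * x - \<nu> * x\<^sup>2 / 2)"
proof -
  define lp where "lp t = ln (p t)" for t
  have lpd: "(lp has_real_derivative dlogp t) (at t)" for t unfolding lp_def[abs_def] by (rule dlogp)
  define h where "h t = - lp t + d * t - \<nu> * t\<^sup>2 / 2" for t
  have der: "(h has_real_derivative (- dlogp t + d - \<nu> * t)) (at t)" for t
    unfolding h_def by (auto intro!: derivative_eq_intros lpd)
  have "h 0 \<le> h x"
  proof (rule min_at_zero[OF der])
    fix t :: real assume "0 < t" then show "0 \<le> - dlogp t + d - \<nu> * t" using scs[of 0 t] by auto
  next
    fix t :: real assume "t < 0" then show "- dlogp t + d - \<nu> * t \<le> 0" using scs[of t 0] by auto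
  qed
  then have "ln (p x) \<le> ln p0 + (d * x - \<nu> * x\<^sup>2 / 2)" unfolding h_def lp_def by simp
  then have "exp (ln (p x)) \<le> exp (ln p0 + (d * x - \<nu> * x\<^sup>2 / 2))" by simp
  then show ?thesis using p_pos[of x] p0_pos by (simp add: exp_add)
qed

lemma p_bounded: "p x \<le> p0 * exp (d\<^sup>2 / (2 * \<nu>))"
proof -
  have "d * x - \<nu> * x\<^sup>2 / 2 \<le> d\<^sup>2 / (2 * \<nu>)"
  proof -
    have "0 \<le> (\<nu> * x - d)\<^sup>2 / (2 * \<nu>)" using nu_pos by simp
    also have "(\<nu> * x - d)\<^sup>2 / (2 * \<nu>) = d\<^sup>2 / (2 * \<nu>) - (d * x - \<nu> * x\<^sup>2 / 2)"
      using nu_pos by (simp add: field_simps power2_eq_square)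
    finally show ?thesis by simp
  qed
  then have "p0 * exp (d * x - \<nu> * x\<^sup>2 / 2) \<le> p0 * exp (d\<^sup>2 / (2 * \<nu>))"
    using p0_pos by simp
  with p_upper[of x] show ?thesis by linarith
qed

lemma mass_rho: "p0 * (sqrt (2 * pi / \<rho>) * exp (d\<^sup>2 / (2 * \<rho>))) \<le> 1"
proof -
  have g: "has_bochner_integral lborel (\<lambda>x. p0 * exp (d * x - \<rho> * x\<^sup>2 / 2)) (p0 * (sqrt (2 * pi / \<rho>) * exp (d\<^sup>2 / (2 * \<rho>))))"
    by (intro has_bochner_integral_mult_right gauss_integral rho_pos)
  have "(LINT x|lborel. p0 * exp (d * x - \<rho> * x\<^sup>2 / 2)) \<le> (LINT x|lborel. p x)"
    using g p_int p_lower gauss_integral[OF rho_pos, THEN hbi_int] by (intro integral_mono) (auto dest: hbi_int)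
  then show ?thesis unfolding hbi_eq[OF g] p_one .
qed

lemma mass_nu: "1 \<le> p0 * (sqrt (2 * pi / \<nu>) * exp (d\<^sup>2 / (2 * \<nu>)))"
proof -
  have g: "has_bochner_integral lborel (\<lambda>x. p0 * exp (d * x - \<nu> * x\<^sup>2 / 2)) (p0 * (sqrt (2 * pi / \<nu>) * exp (d\<^sup>2 / (2 * \<nu>))))"
    by (intro has_bochner_integral_mult_right gauss_integral nu_pos)
  have "(LINT x|lborel. p x) \<le> (LINT x|lborel. p0 * exp (d * x - \<nu> * x\<^sup>2 / 2))"
    using g p_int p_upper gauss_integral[OF nu_pos, THEN hbi_int] by (intro integral_mono) (auto dest: hbi_int)
  then show ?thesis unfolding hbi_eq[OF g] p_one .
qed

end



lemma LBINT_0_deriv: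
  fixes f :: "real \<Rightarrow> real"
  assumes cont: "continuous_on UNIV f"
  shows "((\<lambda>u. LBINT x=ereal 0..u. f x) has_real_derivative f y) (at y)"
proof -
  define a where "a = min 0 y - 1"
  define b where "b = max 0 y + 1"
  have "((\<lambda>u. LBINT x=ereal 0..u. f x) has_vector_derivative f y) (at y within {a..b})"
    by (rule interval_integral_FTC2) (auto simp: a_def b_def intro: continuous_on_subset[OF cont])
  then have "((\<lambda>u. LBINT x=ereal 0..u. f x) has_vector_derivative f y) (at y within {a<..<b})"
    by (rule has_vector_derivative_within_subset) auto
  then have "((\<lambda>u. LBINT x=ereal 0..u. f x) has_vector_derivative f y) (at y)"
    by (subst (asm) has_vector_derivative_within_open) (auto simp: a_def b_def)
  then show ?thesis by (simp add: has_real_derivative_iff_has_vector_derivative)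
qed

lemma Iic_split:
  fixes f :: "real \<Rightarrow> real"
  assumes int: "integrable lborel f"
  shows "(LINT x|lborel. indicator {..y} x * f x) = (LINT x|lborel. indicator {..0} x * f x) + (LBINT x=ereal 0..y. f x)"
proof (cases "0 \<le> y")
  case True
  have "(LBINT x=ereal 0..y. f x) = (LINT x|lborel. indicator {0<..y} x * f x)"
    using True by (simp add: interval_integral_Ioc set_lebesgue_integral_def)
  moreover have "(LINT x|lborel. indicator {..y} x * f x) = (LINT x|lborel. indicator {..0} x * f x + indicator {0<..y} x * f x)"
    using True by (intro Bochner_Integration.integral_cong) (auto split: split_indicator)
  moreover have "\<dots> = (LINT x|lborel. indicator {..0} x * f x) + (LINT x|lborel. indicator {0<..y} x * f x)"
    by (intro Bochner_Integration.integral_add) (auto intro!: integrable_mult_indicator[where 'b=real, simplified] int)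
  ultimately show ?thesis by simp
next
  case False
  have "(LBINT x=ereal 0..y. f x) = - (LINT x|lborel. indicator {y<..0} x * f x)"
    using False by (simp add: interval_integral_endpoints_reverse[of "ereal 0" y] interval_integral_Ioc set_lebesgue_integral_def)
  moreover have "(LINT x|lborel. indicator {..0} x * f x) = (LINT x|lborel. indicator {..y} x * f x + indicator {y<..0} x * f x)"
    using False by (intro Bochner_Integration.integral_cong) (auto split: split_indicator)
  moreover have "\<dots> = (LINT x|lborel. indicator {..y} x * f x) + (LINT x|lborel. indicator {y<..0} x * f x)"
    by (intro Bochner_Integration.integral_add) (auto intro!: integrable_mult_indicator[where 'b=real, simplified] int)
  ultimately show ?thesis by simp
qed

lemma Iic_deriv:
  fixes f :: "real \<Rightarrow> real"
  assumes int: "integrable lborel f" and cont: "continuous_on UNIV f"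
  shows "((\<lambda>y. LINT x|lborel. indicator {..y} x * f x) has_real_derivative f y) (at y)"
proof -
  have "((\<lambda>u. (LINT x|lborel. indicator {..0} x * f x) + (LBINT x=ereal 0..u. f x)) has_real_derivative 0 + f y) (at y)"
    by (intro DERIV_add DERIV_const LBINT_0_deriv cont)
  moreover have "(\<lambda>y. LINT x|lborel. indicator {..y} x * f x) = (\<lambda>u. (LINT x|lborel. indicator {..0} x * f x) + (LBINT x=ereal 0..u. f x))"
    by (rule ext) (rule Iic_split[OF int])
  ultimately show ?thesis by simp
qed

lemma Ioi_deriv:
  fixes f :: "real \<Rightarrow> real"
  assumes int: "integrable lborel f" and cont: "continuous_on UNIV f"
  shows "((\<lambda>y. LINT x|lborel. indicator {y<..} x * f x) has_real_derivative - f y) (at y)"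
proof -
  have eq: "(LINT x|lborel. indicator {y<..} x * f x) = (LINT x|lborel. f x) - (LINT x|lborel. indicator {..y} x * f x)" for y
  proof -
    have "(LINT x|lborel. indicator {y<..} x * f x) = (LINT x|lborel. f x - indicator {..y} x * f x)"
      by (intro Bochner_Integration.integral_cong) (auto split: split_indicator)
    also have "\<dots> = (LINT x|lborel. f x) - (LINT x|lborel. indicator {..y} x * f x)"
      by (intro Bochner_Integration.integral_diff) (auto intro!: integrable_mult_indicator[where 'b=real, simplified] int)
    finally show ?thesis .
  qed
  have "((\<lambda>y. (LINT x|lborel. f x) - (LINT x|lborel. indicator {..y} x * f x)) has_real_derivative 0 - f y) (at y)"
    by (intro DERIV_diff DERIV_const Iic_deriv int cont)
  then show ?thesis by (simp add: eq)
qed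




lemma integrable_gauss_bound:
  fixes g :: "real \<Rightarrow> real"
  assumes meas: "g \<in> borel_measurable borel" and b: "0 < b"
    and bnd: "\<And>x. \<bar>g x\<bar> \<le> C * exp (a * x - b * x\<^sup>2 / 2)"
  shows "integrable lborel g"
proof (rule Bochner_Integration.integrable_bound)
  show "integrable lborel (\<lambda>x. C * exp (a * x - b * x\<^sup>2 / 2))"
    using gauss_integral[OF b, of a, THEN hbi_int] by simp
  show "g \<in> borel_measurable lborel" using meas by simp
  show "AE x in lborel. norm (g x) \<le> norm (C * exp (a * x - b * x\<^sup>2 / 2))"
    using bnd by (auto intro: order_trans[OF _ abs_ge_self])
qed

context lc begin

definition "P1 y = (LINT x|lborel. indicator {..y} x * (p x * exp x))"
definition "Q2 y = (LINT x|lborel. indicator {y<..} x * (p x * exp (- x)))"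
definition "A y = exp (- y) * P1 y"
definition "B y = exp y * Q2 y"
definition "F y = A y + B y"
definition "G y = B y - A y"

lemma f1_cont: "continuous_on UNIV (\<lambda>x. p x * exp x)"
  by (intro continuous_intros p_cont)
lemma f2_cont: "continuous_on UNIV (\<lambda>x. p x * exp (- x))"
  by (intro continuous_intros p_cont)

lemma f1_int: "integrable lborel (\<lambda>x. p x * exp x)"
proof (rule integrable_gauss_bound[OF _ nu_pos])
  fix x
  have "\<bar>p x * exp x\<bar> = p x * exp x" using p_pos[of x] by simp
  also have "\<dots> \<le> p0 * exp (d * x - \<nu> * x\<^sup>2 / 2) * exp x" using p_upper[of x] by simp
  also have "\<dots> = p0 * exp ((d + 1) * x - \<nu> * x\<^sup>2 / 2)" by (simp add: mult.assoc exp_add[symmetric] algebra_simps)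
  finally show "\<bar>p x * exp x\<bar> \<le> p0 * exp ((d + 1) * x - \<nu> * x\<^sup>2 / 2)" .
qed measurable

lemma f2_int: "integrable lborel (\<lambda>x. p x * exp (- x))"
proof (rule integrable_gauss_bound[OF _ nu_pos])
  fix x
  have "\<bar>p x * exp (- x)\<bar> = p x * exp (- x)" using p_pos[of x] by simp
  also have "\<dots> \<le> p0 * exp (d * x - \<nu> * x\<^sup>2 / 2) * exp (- x)" using p_upper[of x] by simp
  also have "\<dots> = p0 * exp ((d - 1) * x - \<nu> * x\<^sup>2 / 2)" by (simp add: mult.assoc exp_add[symmetric] algebra_simps)
  finally show "\<bar>p x * exp (- x)\<bar> \<le> p0 * exp ((d - 1) * x - \<nu> * x\<^sup>2 / 2)" .
qed measurable

lemma A_deriv: "(A has_real_derivative (p y - A y)) (at y)"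
proof -
  have d1: "((\<lambda>y. exp (- y)) has_real_derivative - exp (- y)) (at y)"
    by (auto intro!: derivative_eq_intros)
  have d2: "(P1 has_real_derivative p y * exp y) (at y)"
    unfolding P1_def[abs_def] by (rule Iic_deriv[OF f1_int f1_cont])
  have eq: "- exp (- y) * P1 y + p y * exp y * exp (- y) = p y - exp (- y) * P1 y"
    by (simp add: exp_minus field_simps)
  have "((\<lambda>y. exp (- y) * P1 y) has_real_derivative p y - exp (- y) * P1 y) (at y)"
    using DERIV_mult[OF d1 d2] unfolding eq .
  then show ?thesis unfolding A_def[abs_def] .
qed

lemma B_deriv: "(B has_real_derivative (B y - p y)) (at y)"
proof -
  have d1: "((\<lambda>y. exp y) has_real_derivative exp y) (at y)"
    by (auto intro!: derivative_eq_intros)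
  have d2: "(Q2 has_real_derivative - (p y * exp (- y))) (at y)"
    unfolding Q2_def[abs_def] by (rule Ioi_deriv[OF f2_int f2_cont])
  have eq: "exp y * Q2 y + - (p y * exp (- y)) * exp y = exp y * Q2 y - p y"
    by (simp add: exp_minus field_simps)
  have "((\<lambda>y. exp y * Q2 y) has_real_derivative exp y * Q2 y - p y) (at y)"
    using DERIV_mult[OF d1 d2] unfolding eq .
  then show ?thesis unfolding B_def[abs_def] .
qed

lemma F_deriv: "(F has_real_derivative G y) (at y)"
proof -
  have "((\<lambda>y. A y + B y) has_real_derivative (p y - A y) + (B y - p y)) (at y)"
    by (intro DERIV_add A_deriv B_deriv)
  then show ?thesis unfolding F_def[abs_def] G_def by simp
qed

lemma G_deriv: "(G has_real_derivative (F y - 2 * p y)) (at y)"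
proof -
  have "((\<lambda>y. B y - A y) has_real_derivative (B y - p y) - (p y - A y)) (at y)"
    by (intro DERIV_diff A_deriv B_deriv)
  then show ?thesis unfolding G_def[abs_def] F_def by (simp add: algebra_simps)
qed

lemma A_nonneg: "0 \<le> A y"
  unfolding A_def P1_def by (intro mult_nonneg_nonneg integral_nonneg_AE AE_I2) (auto intro!: mult_nonneg_nonneg simp: less_imp_le[OF p_pos])

lemma B_nonneg: "0 \<le> B y"
  unfolding B_def Q2_def by (intro mult_nonneg_nonneg integral_nonneg_AE AE_I2) (auto intro!: mult_nonneg_nonneg simp: less_imp_le[OF p_pos])

lemma F_eq: "F y = (LINT x|lborel. p x * exp (- \<bar>x - y\<bar>))"
proof -
  have "F y = (LINT x|lborel. exp (- y) * (indicator {..y} x * (p x * exp x))) + (LINT x|lborel. exp y * (indicator {y<..} x * (p x * exp (- x))))"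
    unfolding F_def A_def B_def P1_def Q2_def by simp
  also have "\<dots> = (LINT x|lborel. exp (- y) * (indicator {..y} x * (p x * exp x)) + exp y * (indicator {y<..} x * (p x * exp (- x))))"
    by (intro Bochner_Integration.integral_add[symmetric] integrable_mult_right
        integrable_mult_indicator[where 'b=real, simplified] f1_int f2_int) auto
  also have "\<dots> = (LINT x|lborel. p x * exp (- \<bar>x - y\<bar>))"
  proof (intro Bochner_Integration.integral_cong refl)
    fix x
    show "exp (- y) * (indicator {..y} x * (p x * exp x)) + exp y * (indicator {y<..} x * (p x * exp (- x))) = p x * exp (- \<bar>x - y\<bar>)"
      by (cases "x \<le> y") (auto simp: abs_if exp_diff exp_minus field_simps)
  qed
  finally show ?thesis .
qed

lemma F_le1: "F y \<le> 1"
proof -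
  have "F y \<le> (LINT x|lborel. p x)" unfolding F_eq
  proof (intro integral_mono)
    show "integrable lborel (\<lambda>x. p x * exp (- \<bar>x - y\<bar>))"
      by (rule Bochner_Integration.integrable_bound[OF p_int]) (auto simp: abs_mult intro!: AE_I2 mult_left_le)
  qed (use p_int p_pos in \<open>auto simp: mult_le_cancel_left1 less_imp_le\<close>)
  then show ?thesis using p_one by simp
qed

lemma G_abs: "\<bar>G y\<bar> \<le> 1"
  using A_nonneg[of y] B_nonneg[of y] F_le1[of y] unfolding G_def F_def by linarith

lemma F_nonneg: "0 \<le> F y" using A_nonneg B_nonneg unfolding F_def by (simp add: add_nonneg_nonneg)

lemma F_lip: "\<bar>F a - F b\<bar> \<le> \<bar>a - b\<bar>"
proof (cases a b rule: linorder_cases)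
  case less
  from MVT2[OF less F_deriv] obtain z where z: "F b - F a = (b - a) * G z" by blast
  have "\<bar>F a - F b\<bar> = \<bar>b - a\<bar> * \<bar>G z\<bar>" using z by (metis abs_minus_commute abs_mult)
  also have "\<dots> \<le> \<bar>b - a\<bar> * 1" by (intro mult_left_mono G_abs) auto
  finally show ?thesis by (simp add: abs_minus_commute)
next
  case greater
  from MVT2[OF greater F_deriv] obtain z where z: "F a - F b = (a - b) * G z" by blast
  have "\<bar>F a - F b\<bar> = \<bar>a - b\<bar> * \<bar>G z\<bar>" using z by (metis abs_mult)
  also have "\<dots> \<le> \<bar>a - b\<bar> * 1" by (intro mult_left_mono G_abs) auto
  finally show ?thesis by simp
qed simp

lemma F_cont: "continuous_on UNIV F"
  using F_deriv by (meson DERIV_isCont continuous_at_imp_continuous_on)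
lemma G_cont: "continuous_on UNIV G"
  using G_deriv by (meson DERIV_isCont continuous_at_imp_continuous_on)
lemma F_meas[measurable]: "F \<in> borel_measurable borel" by (rule borel_measurable_continuous_onI[OF F_cont])
lemma G_meas[measurable]: "G \<in> borel_measurable borel" by (rule borel_measurable_continuous_onI[OF G_cont])

end



lemma lexp_le1: "lexp t \<le> 1" unfolding lexp_def by simp
lemma lexp_pos: "0 < lexp t" unfolding lexp_def by simp
lemma lexp_meas[measurable]: "lexp \<in> borel_measurable borel" unfolding lexp_def[abs_def] by measurable

lemma std_normal_hbi: "has_bochner_integral lborel std_normal_density 1"
  by (simp add: has_bochner_integral_iff)

lemma gsig_integrable: "integrable lborel (\<lambda>z. std_normal_density z * lexp (m + s * z))"
  by (rule Bochner_Integration.integrable_bound[OF integrable_normal_density[of 1 0]])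
     (auto intro!: AE_I2 mult_left_le lexp_le1 simp: abs_mult abs_of_pos[OF lexp_pos])

lemma gsig_le1: "gsig s m \<le> 1"
proof -
  have "gsig s m \<le> (LINT z|lborel. std_normal_density z)" unfolding gsig_def
    by (intro integral_mono gsig_integrable) (auto intro!: mult_left_le lexp_le1)
  then show ?thesis by simp
qed

lemma gsig_nonneg: "0 \<le> gsig s m"
  unfolding gsig_def by (intro integral_nonneg_AE AE_I2) (auto intro!: mult_nonneg_nonneg less_imp_le[OF lexp_pos])

context lc begin

lemma Lsig_fubini: "Lsig p s = (LINT z|lborel. std_normal_density z * F (- s * z))"
proof -
  define f where "f m z = p m * (std_normal_density z * lexp (m + s * z))" for m z
  have fm[measurable]: "(\<lambda>(m, z). f m z) \<in> borel_measurable (lborel \<Otimes>\<^sub>M lborel)"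
    unfolding f_def by measurable
  have int: "integrable (lborel \<Otimes>\<^sub>M lborel) (\<lambda>(m, z). f m z)"
  proof (rule lborel_pair.Fubini_integrable)
    show "(\<lambda>(m, z). f m z) \<in> borel_measurable (lborel \<Otimes>\<^sub>M lborel)" by (rule fm)
    show "integrable lborel (\<lambda>m. LINT z|lborel. norm (case (m, z) of (m, z) \<Rightarrow> f m z))"
    proof (rule Bochner_Integration.integrable_bound[OF p_int])
      show "(\<lambda>m. LINT z|lborel. norm (case (m, z) of (m, z) \<Rightarrow> f m z)) \<in> borel_measurable lborel"
        using fm by measurable
      show "AE m in lborel. norm (LINT z|lborel. norm (case (m, z) of (m, z) \<Rightarrow> f m z)) \<le> norm (p m)"
      proof (rule AE_I2)
        fix m
        have eq: "(LINT z|lborel. norm (case (m, z) of (m, z) \<Rightarrow> f m z)) = p m * gsig s m"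
          unfolding f_def gsig_def using p_pos[of m]
          by (simp add: abs_mult abs_of_pos[OF lexp_pos])
        show "norm (LINT z|lborel. norm (case (m, z) of (m, z) \<Rightarrow> f m z)) \<le> norm (p m)"
          unfolding eq using p_pos[of m] gsig_le1[of s m] gsig_nonneg[of s m]
          by (simp add: abs_mult mult_left_le)
      qed
    qed
    show "AE m in lborel. integrable lborel (\<lambda>z. case (m, z) of (m, z) \<Rightarrow> f m z)"
      unfolding f_def by (auto intro!: AE_I2 gsig_integrable)
  qed
  have "Lsig p s = (LINT m|lborel. LINT z|lborel. f m z)"
    unfolding Lsig_def gsig_def f_def by simp
  also have "\<dots> = (LINT z|lborel. LINT m|lborel. f m z)"
    by (rule lborel_pair.Fubini_integral[symmetric]) (use int in simp)
  also have "\<dots> = (LINT z|lborel. std_normal_density z * F (- s * z))"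
  proof (intro Bochner_Integration.integral_cong refl)
    fix z
    have "(LINT m|lborel. f m z) = (LINT m|lborel. std_normal_density z * (p m * exp (- \<bar>m - (- s * z)\<bar>)))"
      unfolding f_def lexp_def by (intro Bochner_Integration.integral_cong) (auto simp: ac_simps)
    also have "\<dots> = std_normal_density z * F (- s * z)"
      by (simp add: F_eq)
    finally show "(LINT m|lborel. f m z) = std_normal_density z * F (- s * z)" .
  qed
  finally show ?thesis .
qed

end



context lc begin

lemma phiF_int: "integrable lborel (\<lambda>z. std_normal_density z * F (c * z))"
  by (rule Bochner_Integration.integrable_bound[OF integrable_normal_density[of 1 0]])
     (auto intro!: AE_I2 mult_left_le F_le1 simp: abs_mult abs_of_nonneg[OF F_nonneg])

lemma phiG_int: "integrable lborel (\<lambda>z. std_normal_density z * (- z * G (c * z)))"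
proof (rule Bochner_Integration.integrable_bound[OF integrable_std_normal_moment_abs[of 1]])
  show "(\<lambda>z. std_normal_density z * (- z * G (c * z))) \<in> borel_measurable lborel" by measurable
  show "AE z in lborel. norm (std_normal_density z * (- z * G (c * z))) \<le> norm (std_normal_density z * \<bar>z\<bar> ^ 1)"
  proof (rule AE_I2)
    fix z
    have "\<bar>- z * G (c * z)\<bar> \<le> \<bar>z\<bar>" using G_abs[of "c * z"] by (simp add: abs_mult mult_left_le)
    then show "norm (std_normal_density z * (- z * G (c * z))) \<le> norm (std_normal_density z * \<bar>z\<bar> ^ 1)"
      by (simp add: abs_mult mult_left_mono)
  qed
qed

lemma L_deriv: "((\<lambda>s. LINT z|lborel. std_normal_density z * F (- s * z)) has_real_derivative
     (LINT z|lborel. std_normal_density z * (- z * G (- s * z)))) (at s)"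
proof -
  define Lf where "Lf s = (LINT z|lborel. std_normal_density z * F (- s * z))" for s
  define q where "q h z = std_normal_density z * ((F (- (s + h) * z) - F (- s * z)) / h)" for h z
  have quot: "(Lf (s + h) - Lf s) / h = (LINT z|lborel. q h z)" for h
  proof -
    have "Lf (s + h) - Lf s = (LINT z|lborel. std_normal_density z * F (- (s + h) * z) - std_normal_density z * F (- s * z))"
      unfolding Lf_def
      using phiF_int[of "- (s + h)"] phiF_int[of "- s"]
      by (intro Bochner_Integration.integral_diff[symmetric]) simp_all
    then show ?thesis unfolding q_def by (simp add: right_diff_distrib)
  qed
  have pw: "((\<lambda>h. q h z) \<longlongrightarrow> std_normal_density z * (- z * G (- s * z))) (at 0)" for z
  proof -
    have "((\<lambda>t. F (- t * z)) has_real_derivative G (- s * z) * (- z)) (at s)"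
      by (rule DERIV_chain2[OF F_deriv]) (auto intro!: derivative_eq_intros)
    then have "((\<lambda>h. (F (- (s + h) * z) - F (- s * z)) / h) \<longlongrightarrow> G (- s * z) * (- z)) (at 0)"
      unfolding DERIV_def by simp
    then have "((\<lambda>h. std_normal_density z * ((F (- (s + h) * z) - F (- s * z)) / h)) \<longlongrightarrow> std_normal_density z * (G (- s * z) * (- z))) (at 0)"
      by (intro tendsto_mult_left)
    then show ?thesis unfolding q_def by (simp add: ac_simps)
  qed
  have bnd: "\<bar>q h z\<bar> \<le> std_normal_density z * \<bar>z\<bar> ^ 1" for h z
  proof (cases "h = 0")
    case True then show ?thesis unfolding q_def by simp
  next
    case False
    have "\<bar>F (- (s + h) * z) - F (- s * z)\<bar> \<le> \<bar>h\<bar> * \<bar>z\<bar>"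
      using F_lip[of "- (s + h) * z" "- s * z"] by (simp add: algebra_simps abs_mult[symmetric])
    then have "\<bar>(F (- (s + h) * z) - F (- s * z)) / h\<bar> \<le> \<bar>z\<bar>"
      using False by (simp add: abs_divide divide_le_eq mult.commute)
    then have "std_normal_density z * \<bar>(F (- (s + h) * z) - F (- s * z)) / h\<bar> \<le> std_normal_density z * \<bar>z\<bar>"
      by (intro mult_left_mono) simp_all
    then show ?thesis unfolding q_def by (simp only: abs_mult abs_of_nonneg[OF normal_density_nonneg] power_one_right)
  qed
  have "((\<lambda>h. (Lf (s + h) - Lf s) / h) \<longlongrightarrow> (LINT z|lborel. std_normal_density z * (- z * G (- s * z)))) (at 0)"
  proof (subst LIMSEQ_SEQ_conv[symmetric], intro allI impI)
    fix S :: "nat \<Rightarrow> real" assume S: "(\<forall>n. S n \<noteq> 0) \<and> S \<longlonglongrightarrow> 0"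
    have "(\<lambda>n. LINT z|lborel. q (S n) z) \<longlonglongrightarrow> (LINT z|lborel. std_normal_density z * (- z * G (- s * z)))"
    proof (rule integral_dominated_convergence[where w="\<lambda>z. std_normal_density z * \<bar>z\<bar> ^ 1"])
      show "(\<lambda>z. std_normal_density z * (- z * G (- s * z))) \<in> borel_measurable lborel" by measurable
      show "(\<lambda>z. q (S n) z) \<in> borel_measurable lborel" for n unfolding q_def by measurable
      show "integrable lborel (\<lambda>z. std_normal_density z * \<bar>z\<bar> ^ 1)" by (rule integrable_std_normal_moment_abs)
      show "AE z in lborel. (\<lambda>n. q (S n) z) \<longlonglongrightarrow> std_normal_density z * (- z * G (- s * z))"
      proof (rule AE_I2)
        fix z
        show "(\<lambda>n. q (S n) z) \<longlonglongrightarrow> std_normal_density z * (- z * G (- s * z))"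
          using pw[of z] S unfolding LIMSEQ_SEQ_conv[symmetric] by blast
      qed
      show "AE z in lborel. norm (q (S n) z) \<le> std_normal_density z * \<bar>z\<bar> ^ 1" for n
        using bnd by (auto intro!: AE_I2)
    qed
    then show "(\<lambda>n. (Lf (s + S n) - Lf s) / S n) \<longlonglongrightarrow> (LINT z|lborel. std_normal_density z * (- z * G (- s * z)))"
      by (simp add: quot)
  qed
  then show ?thesis unfolding DERIV_def Lf_def .
qed

end



lemma phi_deriv: "(std_normal_density has_real_derivative (- z * std_normal_density z)) (at z)"
proof -
  have "((\<lambda>z. exp (- z\<^sup>2 / 2)) has_real_derivative exp (- z\<^sup>2 / 2) * (- z)) (at z)"
    by (auto intro!: derivative_eq_intros)
  from DERIV_cmult[OF this, of "1 / sqrt (2 * pi)"]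
  have "((\<lambda>z. 1 / sqrt (2 * pi) * exp (- z\<^sup>2 / 2)) has_real_derivative 1 / sqrt (2 * pi) * (exp (- z\<^sup>2 / 2) * (- z))) (at z)" .
  moreover have "1 / sqrt (2 * pi) * (exp (- z\<^sup>2 / 2) * (- z)) = - z * (1 / sqrt (2 * pi) * exp (- z\<^sup>2 / 2))"
    by (simp only: mult_ac mult_minus_left mult_minus_right)
  ultimately show ?thesis unfolding std_normal_density_def[abs_def] by (simp add: mult_ac)
qed

lemma phi_top: "(std_normal_density \<longlongrightarrow> 0) at_top"
  unfolding std_normal_density_def[abs_def] by real_asymp

lemma phi_bot: "(std_normal_density \<longlongrightarrow> 0) at_bot"
  unfolding std_normal_density_def[abs_def] by real_asymp

lemma phi_cont: "continuous_on UNIV std_normal_density"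
  unfolding std_normal_density_def[abs_def] by (intro continuous_intros) auto

context lc begin

lemma phip_int: "integrable lborel (\<lambda>z. std_normal_density z * p (c * z))"
proof (rule Bochner_Integration.integrable_bound[OF integrable_mult_right[OF integrable_normal_density[of 1 0], of "p0 * exp (d\<^sup>2 / (2 * \<nu>))"]])
  show "(\<lambda>z. std_normal_density z * p (c * z)) \<in> borel_measurable lborel" by measurable
  show "AE x in lborel. norm (std_normal_density x * p (c * x)) \<le> norm (p0 * exp (d\<^sup>2 / (2 * \<nu>)) * normal_density 0 1 x)"
    using p_bounded p_pos p0_pos by (auto intro!: AE_I2 simp: abs_mult less_imp_le mult.commute mult_left_mono)
qed simp

lemma stein: "(LINT z|lborel. std_normal_density z * (- z * G (- s * z))) =
   s * (LINT z|lborel. std_normal_density z * (F (- s * z) - 2 * p (- s * z)))"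
proof -
  define H where "H z = std_normal_density z * G (- s * z)" for z
  define H' where "H' z = (- z * std_normal_density z) * G (- s * z) + std_normal_density z * ((F (- s * z) - 2 * p (- s * z)) * (- s))" for z
  have Hd: "(H has_real_derivative H' z) (at z)" for z
  proof -
    have "((\<lambda>z. G (- s * z)) has_real_derivative (F (- s * z) - 2 * p (- s * z)) * (- s)) (at z)"
      by (rule DERIV_chain2[OF G_deriv]) (auto intro!: derivative_eq_intros)
    from DERIV_mult'[OF phi_deriv this] show ?thesis unfolding H_def[abs_def] H'_def
      by (simp add: ac_simps)
  qed
  have H'cont: "isCont H' z" for z
  proof -
    have "continuous_on UNIV H'" unfolding H'_def
      by (intro continuous_intros phi_cont p_cont F_cont G_cont continuous_on_compose2[OF G_cont]
          continuous_on_compose2[OF F_cont] continuous_on_compose2[OF p_cont]) auto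
    then show ?thesis by (simp add: continuous_on_eq_continuous_at)
  qed
  have i1: "integrable lborel (\<lambda>z. std_normal_density z * (- z * G (- s * z)))" by (rule phiG_int)
  have i2': "integrable lborel (\<lambda>z. std_normal_density z * F (- s * z) - 2 * (std_normal_density z * p (- s * z)))"
    by (intro Bochner_Integration.integrable_diff integrable_mult_right phiF_int phip_int)
  have "(\<lambda>z. std_normal_density z * (F (- s * z) - 2 * p (- s * z))) = (\<lambda>z. std_normal_density z * F (- s * z) - 2 * (std_normal_density z * p (- s * z)))"
    by (rule ext) (simp add: algebra_simps)
  with i2' have i2: "integrable lborel (\<lambda>z. std_normal_density z * (F (- s * z) - 2 * p (- s * z)))" by simp
  have H'eq: "H' z = std_normal_density z * (- z * G (- s * z)) - s * (std_normal_density z * (F (- s * z) - 2 * p (- s * z)))" for z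
    unfolding H'_def by (simp add: algebra_simps)
  have iH': "integrable lborel H'" unfolding H'eq[abs_def] using i1 i2 by simp
  have Hbound: "\<bar>H z\<bar> \<le> std_normal_density z" for z
    unfolding H_def using G_abs[of "- s * z"] by (simp add: abs_mult mult_left_le)
  have Htop: "(H \<longlongrightarrow> 0) at_top"
    by (rule Lim_null_comparison[OF _ phi_top]) (auto intro!: always_eventually Hbound)
  have Hbot: "(H \<longlongrightarrow> 0) at_bot"
    by (rule Lim_null_comparison[OF _ phi_bot]) (auto intro!: always_eventually Hbound)
  have "(LBINT x=-\<infinity>..\<infinity>. H' x) = 0 - 0"
  proof (rule interval_integral_FTC_integrable)
    show "((H \<circ> real_of_ereal) \<longlongrightarrow> 0) (at_right (- \<infinity>))" using Hbot by (simp add: ereal_tendsto_simps1)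
    show "((H \<circ> real_of_ereal) \<longlongrightarrow> 0) (at_left \<infinity>)" using Htop by (simp add: ereal_tendsto_simps1)
    show "set_integrable lborel (einterval (- \<infinity>) \<infinity>) H'" using iH' by (simp add: set_integrable_def)
  qed (auto simp: Hd[THEN has_real_derivative_iff_has_vector_derivative[THEN iffD1]] H'cont)
  then have "(LINT z|lborel. H' z) = 0"
    by (simp add: interval_lebesgue_integral_def set_lebesgue_integral_def)
  then have "(LINT z|lborel. std_normal_density z * (- z * G (- s * z))) - (LINT z|lborel. s * (std_normal_density z * (F (- s * z) - 2 * p (- s * z)))) = 0"
    unfolding H'eq using i1 i2 by (subst Bochner_Integration.integral_diff[symmetric]) auto
  then show ?thesis by simp
qed

end



lemma sqrt_2_pi_le: "sqrt (2 / pi) \<le> 4 / 5"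
proof -
  have "2 / pi \<le> (4/5)\<^sup>2" using pi_approx(1) by (simp add: divide_le_eq power2_eq_square)
  from real_sqrt_le_mono[OF this] show ?thesis by simp
qed

lemma phi_mgf: "has_bochner_integral lborel (\<lambda>z. std_normal_density z * exp (c * z)) (exp (c\<^sup>2 / 2))"
proof -
  have "has_bochner_integral lborel (\<lambda>z. 1 / sqrt (2 * pi) * exp (c * z - 1 * z\<^sup>2 / 2)) (1 / sqrt (2 * pi) * (sqrt (2 * pi / 1) * exp (c\<^sup>2 / (2 * 1))))"
    by (intro has_bochner_integral_mult_right gauss_integral) simp
  moreover have "1 / sqrt (2 * pi) * exp (c * z - 1 * z\<^sup>2 / 2) = std_normal_density z * exp (c * z)" for z
  proof -
    have e: "exp (c * z - 1 * z\<^sup>2 / 2) = exp (- z\<^sup>2 / 2) * exp (c * z)"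
      by (rule trans[OF _ exp_add]) simp
    show ?thesis by (simp only: e std_normal_density_def mult.assoc)
  qed
  ultimately show ?thesis by simp
qed

context lc begin

lemma Fint: "integrable lborel (\<lambda>x. p x * exp (- \<bar>x - y\<bar>))"
  by (rule Bochner_Integration.integrable_bound[OF p_int]) (auto simp: abs_mult intro!: AE_I2 mult_left_le)

lemma F_shift_lower: "exp (- \<bar>y\<bar>) * F 0 \<le> F y"
proof -
  have "exp (- \<bar>y\<bar>) * F 0 = (LINT x|lborel. exp (- \<bar>y\<bar>) * (p x * exp (- \<bar>x\<bar>)))"
    by (simp add: F_eq)
  also have "\<dots> \<le> (LINT x|lborel. p x * exp (- \<bar>x - y\<bar>))"
  proof (rule integral_mono)
    show "integrable lborel (\<lambda>x. exp (- \<bar>y\<bar>) * (p x * exp (- \<bar>x\<bar>)))"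
      using Fint[of 0] by simp
    show "integrable lborel (\<lambda>x. p x * exp (- \<bar>x - y\<bar>))" by (rule Fint)
    fix x
    have "- \<bar>y\<bar> + - \<bar>x\<bar> \<le> - \<bar>x - y\<bar>" by simp
    then have "exp (- \<bar>y\<bar>) * exp (- \<bar>x\<bar>) \<le> exp (- \<bar>x - y\<bar>)" by (simp add: exp_add[symmetric])
    then show "exp (- \<bar>y\<bar>) * (p x * exp (- \<bar>x\<bar>)) \<le> p x * exp (- \<bar>x - y\<bar>)"
      using p_pos[of x] by (simp add: ac_simps mult_left_mono)
  qed
  finally show ?thesis by (simp add: F_eq)
qed

lemma L_lower:
  assumes s: "0 < s" "s \<le> 1"
  shows "F 0 / 5 \<le> (LINT z|lborel. std_normal_density z * F (- s * z))"
proof -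
  have iabs: "integrable lborel (\<lambda>z. std_normal_density z * \<bar>z\<bar> ^ 1)" by (rule integrable_std_normal_moment_abs)
  have eabs: "(LINT z|lborel. std_normal_density z * \<bar>z\<bar> ^ (2 * 0 + 1)) = sqrt (2 / pi)"
    using integral_std_normal_moment_abs_odd[of 0] by simp
  have "F 0 * (1 - s * sqrt (2 / pi)) = (LINT z|lborel. F 0 * (std_normal_density z - s * (std_normal_density z * \<bar>z\<bar> ^ 1)))"
    using iabs eabs by (simp add: Bochner_Integration.integral_diff right_diff_distrib)
  also have "\<dots> \<le> (LINT z|lborel. std_normal_density z * F (- s * z))"
  proof (rule integral_mono)
    show "integrable lborel (\<lambda>z. F 0 * (std_normal_density z - s * (std_normal_density z * \<bar>z\<bar> ^ 1)))"
      using iabs by (intro integrable_mult_right Bochner_Integration.integrable_diff) auto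
    show "integrable lborel (\<lambda>z. std_normal_density z * F (- s * z))" by (rule phiF_int)
    fix z
    have "1 - s * \<bar>z\<bar> \<le> exp (- \<bar>- s * z\<bar>)"
      using exp_ge_add_one_self[of "- \<bar>- s * z\<bar>"] s by (simp add: abs_mult)
    then have "F 0 * (1 - s * \<bar>z\<bar>) \<le> F 0 * exp (- \<bar>- s * z\<bar>)"
      using F_nonneg[of 0] by (rule mult_left_mono)
    also have "\<dots> \<le> F (- s * z)" using F_shift_lower[of "- s * z"] by (simp add: mult.commute)
    finally have "std_normal_density z * (F 0 * (1 - s * \<bar>z\<bar>)) \<le> std_normal_density z * F (- s * z)"
      by (simp add: mult_left_mono)
    then show "F 0 * (std_normal_density z - s * (std_normal_density z * \<bar>z\<bar> ^ 1)) \<le> std_normal_density z * F (- s * z)"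
      by (simp add: algebra_simps)
  qed
  finally have *: "F 0 * (1 - s * sqrt (2 / pi)) \<le> (LINT z|lborel. std_normal_density z * F (- s * z))" .
  have "1 / 5 \<le> 1 - s * sqrt (2 / pi)"
  proof -
    have "s * sqrt (2 / pi) \<le> 1 * (4 / 5)" using s sqrt_2_pi_le by (intro mult_mono) auto
    then show ?thesis by simp
  qed
  then have "F 0 * (1 / 5) \<le> F 0 * (1 - s * sqrt (2 / pi))" using F_nonneg[of 0] by (rule mult_left_mono)
  with * show ?thesis by simp
qed

lemma F0_lower:
  assumes t: "0 < t"
  shows "p0 * exp (- t / 2) * (sqrt (2 * pi / (\<rho> + 1 / t)) * exp (d\<^sup>2 / (2 * (\<rho> + 1 / t)))) \<le> F 0"
proof -
  have bpos: "0 < \<rho> + 1 / t" by (intro add_pos_pos rho_pos) (simp add: t)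
  have g: "has_bochner_integral lborel (\<lambda>x. p0 * exp (- t / 2) * exp (d * x - (\<rho> + 1 / t) * x\<^sup>2 / 2))
      (p0 * exp (- t / 2) * (sqrt (2 * pi / (\<rho> + 1 / t)) * exp (d\<^sup>2 / (2 * (\<rho> + 1 / t)))))"
    by (intro has_bochner_integral_mult_right gauss_integral bpos)
  have "(LINT x|lborel. p0 * exp (- t / 2) * exp (d * x - (\<rho> + 1 / t) * x\<^sup>2 / 2)) \<le> (LINT x|lborel. p x * exp (- \<bar>x - 0\<bar>))"
  proof (rule integral_mono)
    show "integrable lborel (\<lambda>x. p0 * exp (- t / 2) * exp (d * x - (\<rho> + 1 / t) * x\<^sup>2 / 2))" by (rule hbi_int[OF g])
    show "integrable lborel (\<lambda>x. p x * exp (- \<bar>x - 0\<bar>))" by (rule Fint)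
    fix x
    have ab: "- t / 2 - x\<^sup>2 / (2 * t) \<le> - \<bar>x\<bar>"
    proof -
      have "0 \<le> (\<bar>x\<bar> - t)\<^sup>2 / (2 * t)" using t by simp
      also have "(\<bar>x\<bar> - t)\<^sup>2 / (2 * t) = x\<^sup>2 / (2 * t) - \<bar>x\<bar> + t / 2"
        using t by (simp add: field_simps power2_eq_square)
      finally show ?thesis by simp
    qed
    have "p0 * exp (- t / 2) * exp (d * x - (\<rho> + 1 / t) * x\<^sup>2 / 2) = (p0 * exp (d * x - \<rho> * x\<^sup>2 / 2)) * exp (- t / 2 - x\<^sup>2 / (2 * t))"
      using t by (simp add: exp_add[symmetric] exp_diff field_simps)
    also have "\<dots> \<le> p x * exp (- \<bar>x\<bar>)"
      using p_lower[of x] ab p0_pos p_pos[of x] by (intro mult_mono) auto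
    finally show "p0 * exp (- t / 2) * exp (d * x - (\<rho> + 1 / t) * x\<^sup>2 / 2) \<le> p x * exp (- \<bar>x - 0\<bar>)" by simp
  qed
  then show ?thesis unfolding hbi_eq[OF g] F_eq .
qed

lemma J_upper: "(LINT z|lborel. std_normal_density z * p (- s * z)) \<le> p0 * exp ((d * s)\<^sup>2 / 2)"
proof -
  have g: "has_bochner_integral lborel (\<lambda>z. p0 * (std_normal_density z * exp ((- d * s) * z))) (p0 * exp ((- d * s)\<^sup>2 / 2))"
    by (intro has_bochner_integral_mult_right phi_mgf)
  have "(LINT z|lborel. std_normal_density z * p (- s * z)) \<le> (LINT z|lborel. p0 * (std_normal_density z * exp ((- d * s) * z)))"
  proof (rule integral_mono)
    show "integrable lborel (\<lambda>z. std_normal_density z * p (- s * z))" by (rule phip_int)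
    show "integrable lborel (\<lambda>z. p0 * (std_normal_density z * exp ((- d * s) * z)))" by (rule hbi_int[OF g])
    fix z
    have "p (- s * z) \<le> p0 * exp (d * (- s * z) - \<nu> * (- s * z)\<^sup>2 / 2)" by (rule p_upper)
    also have "\<dots> \<le> p0 * exp ((- d * s) * z)"
      using p0_pos nu_pos by (intro mult_left_mono) auto
    finally have "std_normal_density z * p (- s * z) \<le> std_normal_density z * (p0 * exp ((- d * s) * z))"
      by (rule mult_left_mono) simp
    then show "std_normal_density z * p (- s * z) \<le> p0 * (std_normal_density z * exp ((- d * s) * z))"
      by (simp only: mult_ac)
  qed
  then show ?thesis unfolding hbi_eq[OF g] by (simp add: power2_eq_square)
qed

end



context lc begin

lemma p0_lower_E: "sqrt (\<nu> / (2 * pi)) * exp (- (d\<^sup>2 / (2 * \<nu>))) \<le> p0"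
proof -
  define E where "E = exp (- (d\<^sup>2 / (2 * \<nu>)))"
  have "sqrt (\<nu> / (2 * pi)) * E * 1 \<le> sqrt (\<nu> / (2 * pi)) * E * (p0 * (sqrt (2 * pi / \<nu>) * exp (d\<^sup>2 / (2 * \<nu>))))"
    by (rule mult_left_mono[OF mass_nu]) (use nu_pos in \<open>simp add: E_def\<close>)
  also have "\<dots> = p0 * (sqrt (\<nu> / (2 * pi)) * sqrt (2 * pi / \<nu>)) * (E * exp (d\<^sup>2 / (2 * \<nu>)))"
    by (simp only: mult_ac)
  also have "sqrt (\<nu> / (2 * pi)) * sqrt (2 * pi / \<nu>) = 1"
    using nu_pos by (simp add: real_sqrt_mult[symmetric])
  also have "E * exp (d\<^sup>2 / (2 * \<nu>)) = 1"
    unfolding E_def by (simp add: exp_add[symmetric])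
  finally show ?thesis by (simp add: E_def)
qed

lemma d_sq_gt4:
  assumes Lk: "Lv \<le> kappa_tilde \<rho> \<nu>" and LF: "F 0 / 5 \<le> Lv"
  shows "4 < d\<^sup>2"
proof (rule ccontr)
  assume "\<not> 4 < d\<^sup>2"
  then have d4: "d\<^sup>2 \<le> 4" by simp
  define E where "E = exp (- (d\<^sup>2 / (2 * \<nu>)))"
  define X where "X = sqrt (\<rho> + 1)"
  have Epos: "0 < E" unfolding E_def by simp
  have Xpos: "0 < X" unfolding X_def using rho_pos by simp
  have snu: "0 < sqrt \<nu>" using nu_pos by simp
  have F0: "p0 * exp (- 1 / 2) * sqrt (2 * pi / (\<rho> + 1)) \<le> F 0"
  proof -
    have "p0 * exp (- 1 / 2) * sqrt (2 * pi / (\<rho> + 1)) * 1 \<le> p0 * exp (- 1 / 2) * sqrt (2 * pi / (\<rho> + 1)) * exp (d\<^sup>2 / (2 * (\<rho> + 1)))"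
      using p0_pos rho_pos by (intro mult_left_mono) auto
    also have "\<dots> \<le> F 0" using F0_lower[of 1] by (simp add: mult.assoc)
    finally show ?thesis by simp
  qed
  have low: "1 / 5 * exp (- 1 / 2) * (sqrt \<nu> / X) * E \<le> Lv"
  proof -
    have "sqrt (2 * pi / (\<rho> + 1)) * sqrt (\<nu> / (2 * pi)) = sqrt (2 * pi / (\<rho> + 1) * (\<nu> / (2 * pi)))"
      by (rule real_sqrt_mult[symmetric])
    also have "2 * pi / (\<rho> + 1) * (\<nu> / (2 * pi)) = \<nu> / (\<rho> + 1)" by simp
    also have "sqrt (\<nu> / (\<rho> + 1)) = sqrt \<nu> / X" by (simp add: X_def real_sqrt_divide)
    finally have "sqrt (2 * pi / (\<rho> + 1)) * sqrt (\<nu> / (2 * pi)) = sqrt \<nu> / X" .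
    then have "1 / 5 * exp (- 1 / 2) * (sqrt \<nu> / X) * E = 1 / 5 * exp (- 1 / 2) * sqrt (2 * pi / (\<rho> + 1)) * (sqrt (\<nu> / (2 * pi)) * E)"
      by (simp only: mult_ac)
    also have "\<dots> \<le> 1 / 5 * exp (- 1 / 2) * sqrt (2 * pi / (\<rho> + 1)) * p0"
      using p0_lower_E rho_pos unfolding E_def by (intro mult_left_mono) auto
    also have "\<dots> \<le> F 0 / 5" using F0 by (simp add: mult_ac)
    finally have "1 / 5 * exp (- 1 / 2) * (sqrt \<nu> / X) * E \<le> F 0 / 5" .
    then show ?thesis using LF by linarith
  qed
  have ex: "exp (- (((sqrt \<rho> + 4) / (2 * sqrt \<nu>))\<^sup>2)) \<le> E"
  proof -
    have "((sqrt \<rho> + 4) / (2 * sqrt \<nu>))\<^sup>2 = (sqrt \<rho> + 4)\<^sup>2 / (4 * \<nu>)"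
      using nu_pos by (simp add: power_divide power_mult_distrib)
    moreover have "d\<^sup>2 / (2 * \<nu>) \<le> (sqrt \<rho> + 4)\<^sup>2 / (4 * \<nu>)"
    proof -
      have "16 \<le> (sqrt \<rho> + 4)\<^sup>2" using rho_pos by (simp add: power2_eq_square algebra_simps)
      then have "2 * d\<^sup>2 \<le> (sqrt \<rho> + 4)\<^sup>2" using d4 by linarith
      then show ?thesis using nu_pos by (simp add: field_simps)
    qed
    ultimately show ?thesis unfolding E_def by simp
  qed
  have k2: "kappa_tilde \<rho> \<nu> \<le> sqrt \<nu> / (8 * sqrt (2 * pi) * (sqrt \<rho> + sqrt 2)) * E"
  proof -
    have "kappa_tilde \<rho> \<nu> \<le> sqrt \<nu> / (8 * sqrt (2 * pi) * (sqrt \<rho> + sqrt 2)) * exp (- (((sqrt \<rho> + 4) / (2 * sqrt \<nu>))\<^sup>2))"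
      unfolding kappa_tilde_def by (rule min.cobounded2)
    also have "\<dots> \<le> sqrt \<nu> / (8 * sqrt (2 * pi) * (sqrt \<rho> + sqrt 2)) * E"
      using ex nu_pos rho_pos by (intro mult_left_mono) auto
    finally show ?thesis .
  qed
  have den: "16 * X \<le> 8 * sqrt (2 * pi) * (sqrt \<rho> + sqrt 2)"
  proof -
    have "2 \<le> sqrt (2 * pi)" using pi_ge_two by (simp add: real_le_rsqrt)
    moreover have "X \<le> sqrt \<rho> + sqrt 2"
    proof -
      have "\<rho> + 1 \<le> (sqrt \<rho> + sqrt 2)\<^sup>2" using rho_pos
        by (simp add: power2_eq_square algebra_simps)
      then show ?thesis unfolding X_def using rho_pos by (simp add: real_le_lsqrt)
    qed
    ultimately have "2 * X \<le> sqrt (2 * pi) * (sqrt \<rho> + sqrt 2)" using Xpos by (intro mult_mono) auto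
    then show ?thesis by simp
  qed
  have "sqrt \<nu> / (8 * sqrt (2 * pi) * (sqrt \<rho> + sqrt 2)) \<le> sqrt \<nu> / (16 * X)"
    using den Xpos snu by (intro divide_left_mono) auto
  also have "\<dots> < 1 / 5 * (1 / 2) * (sqrt \<nu> / X)"
    using Xpos snu by (simp add: field_simps)
  also have "\<dots> \<le> 1 / 5 * exp (- 1 / 2) * (sqrt \<nu> / X)"
  proof -
    have "1 / 2 \<le> exp (- 1 / 2 :: real)" using exp_ge_add_one_self[of "- 1 / 2 :: real"] by simp
    then show ?thesis using Xpos snu by (intro mult_right_mono mult_left_mono) auto
  qed
  finally have "sqrt \<nu> / (8 * sqrt (2 * pi) * (sqrt \<rho> + sqrt 2)) * E < 1 / 5 * exp (- 1 / 2) * (sqrt \<nu> / X) * E"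
    using Epos by (intro mult_strict_right_mono) auto
  with k2 low Lk show False by linarith
qed

end



context lc begin

lemma L_main:
  assumes d4: "4 < d\<^sup>2" and LF: "F 0 / 5 \<le> Lv"
  shows "p0 * (sqrt pi / (11 * sqrt \<rho>) * (sqrt \<nu> / (2 * p0 * sqrt pi)) powr (\<nu> / (4 * \<rho>))) \<le> Lv"
proof -
  define c where "c = sqrt \<nu> / (2 * p0 * sqrt pi)"
  have rp: "0 < \<rho>" by (rule rho_pos)
  have cpos: "0 < c" unfolding c_def using nu_pos p0_pos by simp
  have F0: "p0 * exp (- (1 / \<rho>) / 2) * (sqrt (2 * pi / (\<rho> + 1 / (1 / \<rho>))) * exp (d\<^sup>2 / (2 * (\<rho> + 1 / (1 / \<rho>))))) \<le> F 0"
    by (rule F0_lower) (simp add: rp)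
  have e1: "\<rho> + 1 / (1 / \<rho>) = 2 * \<rho>" by simp
  have e2: "sqrt (2 * pi / (2 * \<rho>)) = sqrt pi / sqrt \<rho>" by (simp add: real_sqrt_divide)
  have e3: "exp (- (1 / \<rho>) / 2) * exp (d\<^sup>2 / (2 * (2 * \<rho>))) = exp (d\<^sup>2 / (8 * \<rho>)) * exp (d\<^sup>2 / (8 * \<rho>) - 1 / (2 * \<rho>))"
    by (simp add: exp_add[symmetric] field_simps)
  have e4: "1 \<le> exp (d\<^sup>2 / (8 * \<rho>) - 1 / (2 * \<rho>))"
  proof -
    have "4 / (8 * \<rho>) \<le> d\<^sup>2 / (8 * \<rho>)" using d4 rp by (intro divide_right_mono) auto
    then have "0 \<le> d\<^sup>2 / (8 * \<rho>) - 1 / (2 * \<rho>)" by simp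
    then show ?thesis by simp
  qed
  have F0': "p0 * (sqrt pi / sqrt \<rho>) * exp (d\<^sup>2 / (8 * \<rho>)) \<le> F 0"
  proof -
    have "p0 * (sqrt pi / sqrt \<rho>) * exp (d\<^sup>2 / (8 * \<rho>)) * 1 \<le> p0 * (sqrt pi / sqrt \<rho>) * exp (d\<^sup>2 / (8 * \<rho>)) * exp (d\<^sup>2 / (8 * \<rho>) - 1 / (2 * \<rho>))"
      using e4 p0_pos rp by (intro mult_left_mono) auto
    also have "\<dots> = p0 * (sqrt pi / sqrt \<rho>) * (exp (- (1 / \<rho>) / 2) * exp (d\<^sup>2 / (2 * (2 * \<rho>))))"
      unfolding e3 by (simp only: mult_ac)
    also have "\<dots> \<le> F 0" using F0 unfolding e1 e2 by (simp only: mult_ac)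
    finally show ?thesis by simp
  qed
  have cle: "c \<le> exp (d\<^sup>2 / (2 * \<nu>))"
  proof -
    have "sqrt \<nu> / (2 * sqrt pi) \<le> sqrt (\<nu> / (2 * pi))"
    proof -
      have "sqrt (2 * pi) \<le> 2 * sqrt pi"
        by (simp add: real_sqrt_mult) (use sqrt2_less_2 in \<open>simp add: mult_right_mono less_imp_le\<close>)
      then have "sqrt \<nu> / (2 * sqrt pi) \<le> sqrt \<nu> / sqrt (2 * pi)"
        using nu_pos by (intro divide_left_mono) auto
      then show ?thesis by (simp add: real_sqrt_divide)
    qed
    also have "sqrt (\<nu> / (2 * pi)) = sqrt (\<nu> / (2 * pi)) * exp (- (d\<^sup>2 / (2 * \<nu>))) * exp (d\<^sup>2 / (2 * \<nu>))"
      by (simp add: mult.assoc exp_add[symmetric])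
    also have "\<dots> \<le> p0 * exp (d\<^sup>2 / (2 * \<nu>))"
      using p0_lower_E by (intro mult_right_mono) auto
    finally have "sqrt \<nu> / (2 * sqrt pi) \<le> p0 * exp (d\<^sup>2 / (2 * \<nu>))" .
    then show ?thesis unfolding c_def using p0_pos by (simp add: field_simps)
  qed
  have cpow: "c powr (\<nu> / (4 * \<rho>)) \<le> exp (d\<^sup>2 / (8 * \<rho>))"
  proof -
    have "c powr (\<nu> / (4 * \<rho>)) \<le> exp (d\<^sup>2 / (2 * \<nu>)) powr (\<nu> / (4 * \<rho>))"
      using cle cpos nu_pos rp by (intro powr_mono2) auto
    also have "\<dots> = exp (d\<^sup>2 / (8 * \<rho>))"
      unfolding exp_powr_real using nu_pos rp by (simp add: field_simps)
    finally show ?thesis .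
  qed
  have "p0 * (sqrt pi / (11 * sqrt \<rho>) * c powr (\<nu> / (4 * \<rho>))) \<le> p0 * (sqrt pi / (11 * sqrt \<rho>) * exp (d\<^sup>2 / (8 * \<rho>)))"
    using cpow p0_pos rp by (intro mult_left_mono) auto
  also have "\<dots> \<le> p0 * (sqrt pi / (5 * sqrt \<rho>) * exp (d\<^sup>2 / (8 * \<rho>)))"
    using p0_pos rp by (intro mult_left_mono mult_right_mono divide_left_mono) auto
  also have "\<dots> = p0 * (sqrt pi / sqrt \<rho>) * exp (d\<^sup>2 / (8 * \<rho>)) / 5" by simp
  also have "\<dots> \<le> F 0 / 5" using F0' by simp
  finally show ?thesis using LF unfolding c_def by linarith
qed

lemma J_main:
  assumes sp: "0 < \<sigma>" and small: "\<sigma>\<^sup>2 * \<rho>\<^sup>2 / \<nu> \<le> 1 / 8"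
  shows "(LINT z|lborel. std_normal_density z * p (- \<sigma> * z)) \<le>
     p0 * (sqrt 2 * max 1 ((sqrt \<rho> / (2 * p0 * sqrt pi)) powr (\<nu> / (8 * \<rho>))))"
proof -
  define b where "b = sqrt \<rho> / (2 * p0 * sqrt pi)"
  define B where "B = sqrt \<rho> / (p0 * sqrt (2 * pi))"
  define e where "e = \<nu> / (8 * \<rho>)"
  have rp: "0 < \<rho>" by (rule rho_pos)
  have bpos: "0 < b" unfolding b_def using rp p0_pos by simp
  have epos: "0 \<le> e" unfolding e_def using nu_pos rp by simp
  have ele: "e \<le> 1" unfolding e_def using nu_le_rho rp by (simp add: divide_le_eq)
  have expB: "exp (d\<^sup>2 / (2 * \<rho>)) \<le> B"
  proof -
    have pos: "0 < p0 * sqrt (2 * pi / \<rho>)" using p0_pos rp by simp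
    have "exp (d\<^sup>2 / (2 * \<rho>)) * (p0 * sqrt (2 * pi / \<rho>)) \<le> 1" using mass_rho by (simp only: mult_ac)
    then have "exp (d\<^sup>2 / (2 * \<rho>)) \<le> 1 / (p0 * sqrt (2 * pi / \<rho>))" using pos by (simp add: pos_le_divide_eq)
    also have "1 / (p0 * sqrt (2 * pi / \<rho>)) = B" unfolding B_def using rp p0_pos by (simp add: real_sqrt_divide)
    finally show ?thesis .
  qed
  have B1: "1 \<le> B"
  proof -
    have "1 \<le> exp (d\<^sup>2 / (2 * \<rho>))" using rp by simp
    with expB show ?thesis by linarith
  qed
  have sig: "\<rho> * \<sigma>\<^sup>2 \<le> e"
  proof -
    have "\<sigma>\<^sup>2 * \<rho>\<^sup>2 \<le> \<nu> / 8" using small nu_pos by (simp add: divide_le_eq)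
    then have "\<rho> * \<sigma>\<^sup>2 * \<rho> \<le> \<nu> / 8" by (simp add: power2_eq_square mult_ac)
    then show ?thesis unfolding e_def using rp by (simp add: field_simps)
  qed
  have "exp ((d * \<sigma>)\<^sup>2 / 2) = exp (d\<^sup>2 / (2 * \<rho>)) powr (\<rho> * \<sigma>\<^sup>2)"
    unfolding exp_powr_real using rp by (simp add: field_simps power_mult_distrib)
  also have "\<dots> \<le> B powr (\<rho> * \<sigma>\<^sup>2)"
    using expB rp by (intro powr_mono2) auto
  also have "\<dots> \<le> B powr e" using sig B1 by (rule powr_mono)
  also have "B = sqrt 2 * b"
  proof -
    have "sqrt (2 * pi) = sqrt 2 * sqrt pi" by (simp add: real_sqrt_mult)
    then show ?thesis unfolding B_def b_def using p0_pos
      by (simp add: field_simps)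
  qed
  also have "(sqrt 2 * b) powr e = sqrt 2 powr e * b powr e" by (rule powr_mult)
  also have "\<dots> \<le> sqrt 2 * max 1 (b powr e)"
  proof (rule mult_mono)
    show "sqrt 2 powr e \<le> sqrt 2"
      using powr_mono[OF ele, of "sqrt 2"] by simp
  qed auto
  finally have X: "exp ((d * \<sigma>)\<^sup>2 / 2) \<le> sqrt 2 * max 1 (b powr e)" .
  have "(LINT z|lborel. std_normal_density z * p (- \<sigma> * z)) \<le> p0 * exp ((d * \<sigma>)\<^sup>2 / 2)"
    by (rule J_upper)
  also have "\<dots> \<le> p0 * (sqrt 2 * max 1 (b powr e))" using X p0_pos by (intro mult_left_mono) auto
  finally show ?thesis unfolding b_def e_def .
qed

end



theorem lemma7:
  fixes p dlogp :: "real \<Rightarrow> real" and \<sigma> \<rho> \<nu> :: real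
  assumes nu_pos: "0 < \<nu>" and nu_le_rho: "\<nu> \<le> \<rho>"
    and p_pos: "\<And>x. 0 < p x"
    and p_int: "integrable lborel p" and p_one: "(LINT x|lborel. p x) = 1"
    and dlogp: "\<And>x. ((\<lambda>t. ln (p t)) has_real_derivative dlogp x) (at x)"
    and strong_concave_smooth: "\<And>x y. x < y \<Longrightarrow>
          - \<rho> * (y - x) \<le> dlogp y - dlogp x \<and> dlogp y - dlogp x \<le> - \<nu> * (y - x)"
    and sigma_pos: "0 < \<sigma>"
    and sigma_le1: "\<sigma> \<le> 1"
    and sigma_le2: "\<sigma> \<le> 4 * sqrt 2 / sqrt pi"
    and gamma_le: "gamma_star \<sigma> \<le> min 1 (1 / (4 * sqrt \<rho>))"
    and small: "\<sigma>\<^sup>2 * \<rho>\<^sup>2 / \<nu> \<le> 1 / 8"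
    and loss_small: "Lsig p \<sigma> \<le> kappa_tilde \<rho> \<nu>"
  shows "\<exists>D. ((\<lambda>s. Lsig p s) has_real_derivative D) (at \<sigma>) \<and>
           D \<ge> p 0 * \<sigma> * (sqrt pi / (11 * sqrt \<rho>) *
                 (sqrt \<nu> / (2 * p 0 * sqrt pi)) powr (\<nu> / (4 * \<rho>))
               - 2 * sqrt 2 * max 1 ((sqrt \<rho> / (2 * p 0 * sqrt pi)) powr (\<nu> / (8 * \<rho>))))"
proof -
  interpret lc p dlogp \<rho> \<nu>
    by unfold_locales (use assms in auto)
  define D where "D = (LINT z|lborel. std_normal_density z * (- z * G (- \<sigma> * z)))"
  define Lv where "Lv = (LINT z|lborel. std_normal_density z * F (- \<sigma> * z))"
  define J where "J = (LINT z|lborel. std_normal_density z * p (- \<sigma> * z))"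
  define A where "A = sqrt pi / (11 * sqrt \<rho>) * (sqrt \<nu> / (2 * p 0 * sqrt pi)) powr (\<nu> / (4 * \<rho>))"
  define M where "M = max 1 ((sqrt \<rho> / (2 * p 0 * sqrt pi)) powr (\<nu> / (8 * \<rho>)))"
  have Lfun: "(\<lambda>s. Lsig p s) = (\<lambda>s. LINT z|lborel. std_normal_density z * F (- s * z))"
    by (rule ext) (rule Lsig_fubini)
  have der: "((\<lambda>s. Lsig p s) has_real_derivative D) (at \<sigma>)"
    unfolding Lfun D_def by (rule L_deriv)
  have Deq: "D = \<sigma> * (Lv - 2 * J)"
  proof -
    have "(LINT z|lborel. std_normal_density z * (F (- \<sigma> * z) - 2 * p (- \<sigma> * z)))
        = (LINT z|lborel. std_normal_density z * F (- \<sigma> * z) - 2 * (std_normal_density z * p (- \<sigma> * z)))"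
      by (intro Bochner_Integration.integral_cong refl) (simp add: algebra_simps)
    also have "\<dots> = Lv - 2 * J" unfolding Lv_def J_def
      using phiF_int[of "- \<sigma>"] phip_int[of "- \<sigma>"]
      by (subst Bochner_Integration.integral_diff) auto
    finally have X: "(LINT z|lborel. std_normal_density z * (F (- \<sigma> * z) - 2 * p (- \<sigma> * z))) = Lv - 2 * J" .
    show ?thesis unfolding D_def stein X by (rule refl)
  qed
  have LvL: "Lsig p \<sigma> = Lv" unfolding Lv_def by (rule Lsig_fubini)
  have LF: "F 0 / 5 \<le> Lv" unfolding Lv_def using sigma_pos sigma_le1 by (rule L_lower)
  have Lk: "Lv \<le> kappa_tilde \<rho> \<nu>" using loss_small LvL by simp
  have d4: "4 < (dlogp 0)\<^sup>2" by (rule d_sq_gt4[OF Lk LF])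
  have L1: "p 0 * A \<le> Lv" unfolding A_def by (rule L_main[OF d4 LF])
  have J1: "J \<le> p 0 * (sqrt 2 * M)" unfolding J_def M_def by (rule J_main[OF sigma_pos small])
  have "p 0 * A - 2 * (p 0 * (sqrt 2 * M)) \<le> Lv - 2 * J" using L1 J1 by linarith
  then have "\<sigma> * (p 0 * A - 2 * (p 0 * (sqrt 2 * M))) \<le> \<sigma> * (Lv - 2 * J)"
    using sigma_pos by (intro mult_left_mono) auto
  moreover have "\<sigma> * (p 0 * A - 2 * (p 0 * (sqrt 2 * M))) = p 0 * \<sigma> * (A - 2 * sqrt 2 * M)"
    by (simp add: algebra_simps)
  ultimately have "p 0 * \<sigma> * (A - 2 * sqrt 2 * M) \<le> D" using Deq by simp
  with der show ?thesis unfolding A_def M_def by blast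
qed



end
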